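(* Let $N$ be a finite set and $F:2^N\to\mathbb{R}$. Then $F$ is quasi-submodular if and only if $F$ satisfies the single sub-crossing property.
   Context: For $A\subseteq N$, $i\in N$, write $A+i=A\cup\{i\}$. $F$ is quasi-submodular if for all $X,Y\subseteq N$ both hold: $F(X\cap Y)\ge F(X)\Rightarrow F(Y)\ge F(X\cup Y)$, and $F(X\cap Y)>F(X)\Rightarrow F(Y)>F(X\cup Y)$. $F$ satisfies the single sub-crossing property if for all $A\subseteq B\subseteq N$ and $i\in N\setminus B$ both hold: $F(A)\ge F(B)\Rightarrow F(A+i)\ge F(B+i)$, and $F(A)>F(B)\Rightarrow F(A+i)>F(B+i)$. *)

theory Defs
  imports Complex_Main
begin

definition quasi_submodular :: "'a set \<Rightarrow> ('a set \<Rightarrow> real) \<Rightarrow> bool" where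
  "quasi_submodular N F \<longleftrightarrow>
     (\<forall>X Y. X \<subseteq> N \<longrightarrow> Y \<subseteq> N \<longrightarrow>
        (F (X \<inter> Y) \<ge> F X \<longrightarrow> F Y \<ge> F (X \<union> Y)) \<and>
        (F (X \<inter> Y) > F X \<longrightarrow> F Y > F (X \<union> Y)))"

definition single_sub_crossing :: "'a set \<Rightarrow> ('a set \<Rightarrow> real) \<Rightarrow> bool" where
  "single_sub_crossing N F \<longleftrightarrow>
     (\<forall>A B i. A \<subseteq> B \<longrightarrow> B \<subseteq> N \<longrightarrow> i \<in> N - B \<longrightarrow>
        (F A \<ge> F B \<longrightarrow> F (insert i A) \<ge> F (insert i B)) \<and>
        (F A > F B \<longrightarrow> F (insert i A) > F (insert i B)))"

end

theory Submission
  imports Defs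
begin

lemma ssc_ext:
  assumes ssc: "single_sub_crossing N F" and D: "finite D"
  shows "D \<subseteq> N \<Longrightarrow> D \<inter> B = {} \<Longrightarrow> A \<subseteq> B \<Longrightarrow> B \<subseteq> N \<Longrightarrow>
    (F A \<ge> F B \<longrightarrow> F (A \<union> D) \<ge> F (B \<union> D)) \<and>
    (F A > F B \<longrightarrow> F (A \<union> D) > F (B \<union> D))"
  using D
proof (induction D rule: finite_induct)
  case empty then show ?case by simp
next
  case (insert x D)
  have IH: "(F A \<ge> F B \<longrightarrow> F (A \<union> D) \<ge> F (B \<union> D)) \<and>
    (F A > F B \<longrightarrow> F (A \<union> D) > F (B \<union> D))" using insert by auto
  have s: "A \<union> D \<subseteq> B \<union> D" "B \<union> D \<subseteq> N" "x \<in> N - (B \<union> D)" using insert by auto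
  have st: "(F (A \<union> D) \<ge> F (B \<union> D) \<longrightarrow> F (insert x (A \<union> D)) \<ge> F (insert x (B \<union> D))) \<and>
    (F (A \<union> D) > F (B \<union> D) \<longrightarrow> F (insert x (A \<union> D)) > F (insert x (B \<union> D)))"
    using ssc s unfolding single_sub_crossing_def by blast
  have e: "A \<union> insert x D = insert x (A \<union> D)" "B \<union> insert x D = insert x (B \<union> D)" by auto
  show ?case using IH st unfolding e by blast
qed

theorem proposition2:
  fixes N :: "'a set" and F :: "'a set \<Rightarrow> real"
  assumes "finite N"
  shows "quasi_submodular N F \<longleftrightarrow> single_sub_crossing N F"
proof
  assume q: "quasi_submodular N F"
  show "single_sub_crossing N F"
    unfolding single_sub_crossing_def
  proof (intro allI impI)
    fix A B i assume h: "A \<subseteq> B" "B \<subseteq> N" "i \<in> N - B"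
    have e: "B \<inter> insert i A = A" "B \<union> insert i A = insert i B" using h by auto
    have "insert i A \<subseteq> N" using h by auto
    then show "(F A \<ge> F B \<longrightarrow> F (insert i A) \<ge> F (insert i B)) \<and>
        (F A > F B \<longrightarrow> F (insert i A) > F (insert i B))"
      using q h(2) unfolding quasi_submodular_def by (metis e)
  qed
next
  assume s: "single_sub_crossing N F"
  show "quasi_submodular N F"
    unfolding quasi_submodular_def
  proof (intro allI impI)
    fix X Y assume h: "X \<subseteq> N" "Y \<subseteq> N"
    have f: "finite (Y - X)" using assms h finite_subset by blast
    have r: "(F (X \<inter> Y) \<ge> F X \<longrightarrow> F ((X \<inter> Y) \<union> (Y - X)) \<ge> F (X \<union> (Y - X))) \<and>
      (F (X \<inter> Y) > F X \<longrightarrow> F ((X \<inter> Y) \<union> (Y - X)) > F (X \<union> (Y - X)))"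
      using ssc_ext[OF s f, of X "X \<inter> Y"] h by auto
    have e: "(X \<inter> Y) \<union> (Y - X) = Y" "X \<union> (Y - X) = X \<union> Y" by auto
    show "(F (X \<inter> Y) \<ge> F X \<longrightarrow> F Y \<ge> F (X \<union> Y)) \<and>
        (F (X \<inter> Y) > F X \<longrightarrow> F Y > F (X \<union> Y))" using r unfolding e .
  qed
qed

end
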